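(* Let $G$ be a finite connected graph and let $e_1,\dots,e_c$ be its loop-edges. For $\underline n=(n_1,\dots,n_c)$ with each $n_i$ a positive integer, let $G^{(\underline n)}$ be the refinement of $G$ obtained by inserting $n_i$ new vertices in the interior of $e_i$ for each $i$, and let $\sigma^*:\operatorname{Div}(G)\to\operatorname{Div}(G^{(\underline n)})$ be the map extending divisors by $0$ on the new vertices. Then for every $D\in\operatorname{Div}(G)$, $$r^{\#}_G(D)=r_{G^{(\underline n)}}(\sigma^*D).$$
   Context: Graphs are finite and connected, loops and multiple edges allowed. $\operatorname{Div}(G)$ is the free abelian group on $V(G)$. Define $(v\cdot w)$ as the number of edges joining $v,w$ if $v\ne w$, and $(v\cdot v)=-\operatorname{val}(v)+2\operatorname{loop}(v)$ (valency with loops counted twice). $T_v=\sum_w(v\cdot w)w$, $\operatorname{Prin}(G)$ is the subgroup generated by the $T_v$, $D\sim D'$ iff $D-D'\in\operatorname{Prin}(G)$. The rank $r_G(D)$ is $-1$ if no effective divisor is equivalent to $D$, and otherwise the maximum $k\ge0$ such that for every effective $E$ of degree $k$ some effective divisor is equivalent to $D-E$. Let $\widehat G$ be the graph obtained from $G$ by inserting exactly one new vertex in the interior of every loop-edge, and $\sigma^*:\operatorname{Div}(G)\to\operatorname{Div}(\widehat G)$ extension by zero; define $r^{\#}_G(D):=r_{\widehat G}(\sigma^*D)$. *)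

theory Defs
  imports Main
begin

record ('v, 'e) mgraph =
  verts :: "'v set"
  edges :: "'e set"
  src :: "'e \<Rightarrow> 'v"
  tgt :: "'e \<Rightarrow> 'v"

definition is_loop :: "('v, 'e) mgraph \<Rightarrow> 'e \<Rightarrow> bool" where
  "is_loop G e \<longleftrightarrow> src G e = tgt G e"

definition adj_rel :: "('v, 'e) mgraph \<Rightarrow> ('v \<times> 'v) set" where
  "adj_rel G = {(src G e, tgt G e) | e. e \<in> edges G} \<union> {(tgt G e, src G e) | e. e \<in> edges G}"

definition finite_connected_graph :: "('v, 'e) mgraph \<Rightarrow> bool" where
  "finite_connected_graph G \<longleftrightarrow>
     finite (verts G) \<and> finite (edges G) \<and> verts G \<noteq> {} \<and>
     (\<forall>e \<in> edges G. src G e \<in> verts G \<and> tgt G e \<in> verts G) \<and>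
     (\<forall>v \<in> verts G. \<forall>w \<in> verts G. (v, w) \<in> (adj_rel G)\<^sup>*)"

definition loopnum :: "('v, 'e) mgraph \<Rightarrow> 'v \<Rightarrow> nat" where
  "loopnum G v = card {e \<in> edges G. src G e = v \<and> tgt G e = v}"

definition val :: "('v, 'e) mgraph \<Rightarrow> 'v \<Rightarrow> nat" where
  "val G v = card {e \<in> edges G. src G e = v \<and> tgt G e \<noteq> v}
           + card {e \<in> edges G. tgt G e = v \<and> src G e \<noteq> v}
           + 2 * loopnum G v"

definition inum :: "('v, 'e) mgraph \<Rightarrow> 'v \<Rightarrow> 'v \<Rightarrow> int" where
  "inum G v w = (if v \<noteq> w
      then int (card {e \<in> edges G. {src G e, tgt G e} = {v, w}})
      else - int (val G v) + 2 * int (loopnum G v))"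

definition Div :: "('v, 'e) mgraph \<Rightarrow> ('v \<Rightarrow> int) set" where
  "Div G = {D. \<forall>v. v \<notin> verts G \<longrightarrow> D v = 0}"

definition T :: "('v, 'e) mgraph \<Rightarrow> 'v \<Rightarrow> 'v \<Rightarrow> int" where
  "T G v = (\<lambda>w. if w \<in> verts G then inum G v w else 0)"

definition Prin :: "('v, 'e) mgraph \<Rightarrow> ('v \<Rightarrow> int) set" where
  "Prin G = {P. \<exists>c :: 'v \<Rightarrow> int. P = (\<lambda>w. \<Sum>v \<in> verts G. c v * T G v w)}"

definition lin_equiv :: "('v, 'e) mgraph \<Rightarrow> ('v \<Rightarrow> int) \<Rightarrow> ('v \<Rightarrow> int) \<Rightarrow> bool" where
  "lin_equiv G D D' \<longleftrightarrow> (\<lambda>v. D v - D' v) \<in> Prin G"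

definition effective :: "('v, 'e) mgraph \<Rightarrow> ('v \<Rightarrow> int) \<Rightarrow> bool" where
  "effective G E \<longleftrightarrow> E \<in> Div G \<and> (\<forall>v. E v \<ge> 0)"

definition deg :: "('v, 'e) mgraph \<Rightarrow> ('v \<Rightarrow> int) \<Rightarrow> int" where
  "deg G D = (\<Sum>v \<in> verts G. D v)"

definition rank :: "('v, 'e) mgraph \<Rightarrow> ('v \<Rightarrow> int) \<Rightarrow> int" where
  "rank G D = (if \<not> (\<exists>F. effective G F \<and> lin_equiv G F D) then -1
     else int (GREATEST k::nat. \<forall>E. effective G E \<and> deg G E = int k \<longrightarrow>
              (\<exists>F. effective G F \<and> lin_equiv G F (\<lambda>v. D v - E v))))"

text \<open>Refinement G^(n): insert n e new vertices Inr (e,1), ..., Inr (e, n e) in the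
  interior of each loop-edge e; the loop e becomes the path of edges
  (e,0), ..., (e, n e).\<close>
definition refine :: "('v, 'e) mgraph \<Rightarrow> ('e \<Rightarrow> nat) \<Rightarrow> ('v + 'e \<times> nat, 'e \<times> nat) mgraph" where
  "refine G n = \<lparr>
     verts = Inl ` verts G \<union>
             {Inr (e, j) | e j. e \<in> edges G \<and> is_loop G e \<and> 1 \<le> j \<and> j \<le> n e},
     edges = {(e, 0) | e. e \<in> edges G \<and> \<not> is_loop G e} \<union>
             {(e, k) | e k. e \<in> edges G \<and> is_loop G e \<and> k \<le> n e},
     src = (\<lambda>(e, k). if is_loop G e \<and> 0 < k then Inr (e, k) else Inl (src G e)),
     tgt = (\<lambda>(e, k). if is_loop G e \<and> k < n e then Inr (e, Suc k) else Inl (tgt G e)) \<rparr>"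

definition sigma_ext :: "('v \<Rightarrow> int) \<Rightarrow> ('v + 'e \<times> nat \<Rightarrow> int)" where
  "sigma_ext D = (\<lambda>x. case x of Inl v \<Rightarrow> D v | Inr _ \<Rightarrow> 0)"

text \<open>r^#_G(D) := rank on G-hat (one new vertex on each loop) of sigma^* D.\<close>
definition rank_sharp :: "('v, 'e) mgraph \<Rightarrow> ('v \<Rightarrow> int) \<Rightarrow> int" where
  "rank_sharp G D = rank (refine G (\<lambda>_. 1)) (sigma_ext D)"

end

theory Submission
  imports Defs
begin


definition ind :: "'x \<Rightarrow> 'x \<Rightarrow> int" where
  "ind x = (\<lambda>w. if w = x then 1 else 0)"

lemma inum_sym: "inum H v w = inum H w v"
  unfolding inum_def by (auto simp: insert_commute)

lemma row_sum_zero: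
  assumes finV: "finite (verts H)" and finE: "finite (edges H)"
    and ends: "\<forall>e\<in>edges H. src H e \<in> verts H \<and> tgt H e \<in> verts H"
    and v: "v \<in> verts H"
  shows "(\<Sum>w\<in>verts H. inum H v w) = 0"
proof -
  define A where "A w = {e \<in> edges H. {src H e, tgt H e} = {v, w}}" for w
  define B1 where "B1 = {e \<in> edges H. src H e = v \<and> tgt H e \<noteq> v}"
  define B2 where "B2 = {e \<in> edges H. tgt H e = v \<and> src H e \<noteq> v}"
  have U: "(\<Union>w\<in>verts H - {v}. A w) = B1 \<union> B2"
  proof
    show "(\<Union>w\<in>verts H - {v}. A w) \<subseteq> B1 \<union> B2"
      unfolding A_def B1_def B2_def by (auto simp: doubleton_eq_iff)
    show "B1 \<union> B2 \<subseteq> (\<Union>w\<in>verts H - {v}. A w)"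
    proof
      fix e assume "e \<in> B1 \<union> B2"
      then show "e \<in> (\<Union>w\<in>verts H - {v}. A w)"
      proof
        assume "e \<in> B1"
        then have "e \<in> A (tgt H e)" "tgt H e \<in> verts H - {v}"
          using ends unfolding A_def B1_def by auto
        then show ?thesis by blast
      next
        assume "e \<in> B2"
        then have "e \<in> A (src H e)" "src H e \<in> verts H - {v}"
          using ends unfolding A_def B2_def by (auto simp: insert_commute)
        then show ?thesis by blast
      qed
    qed
  qed
  have "(\<Sum>w\<in>verts H - {v}. card (A w)) = card (\<Union>w\<in>verts H - {v}. A w)"
    by (rule card_UN_disjoint[symmetric]) (use finV finE in \<open>auto simp: A_def doubleton_eq_iff\<close>)
  also have "\<dots> = card B1 + card B2"
    unfolding U by (rule card_Un_disjoint) (use finE in \<open>auto simp: B1_def B2_def\<close>)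
  finally have S: "(\<Sum>w\<in>verts H - {v}. card (A w)) = card B1 + card B2" .
  have "(\<Sum>w\<in>verts H. inum H v w) = inum H v v + (\<Sum>w\<in>verts H - {v}. inum H v w)"
    using finV v by (simp add: sum.remove)
  also have "(\<Sum>w\<in>verts H - {v}. inum H v w) = (\<Sum>w\<in>verts H - {v}. int (card (A w)))"
    by (rule sum.cong) (auto simp: inum_def A_def)
  also have "\<dots> = int (card B1 + card B2)" using S by (metis of_nat_sum)
  finally show ?thesis
    by (simp add: inum_def val_def B1_def B2_def)
qed

lemma Prin_T: "v0 \<in> verts H \<Longrightarrow> finite (verts H) \<Longrightarrow> T H v0 \<in> Prin H"
  unfolding Prin_def
proof (rule CollectI, rule exI[of _ "\<lambda>v. if v = v0 then 1 else 0"], rule ext)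
  fix w assume "v0 \<in> verts H" "finite (verts H)"
  then show "T H v0 w = (\<Sum>v\<in>verts H. (if v = v0 then 1 else 0) * T H v w)"
  proof -
    have "(\<Sum>v\<in>verts H. (if v = v0 then 1 else 0) * T H v w) = (\<Sum>v\<in>verts H. if v = v0 then T H v w else 0)"
      by (rule sum.cong) auto
    then show ?thesis using \<open>v0 \<in> verts H\<close> \<open>finite (verts H)\<close> by (simp add: sum.delta)
  qed
qed

lemma Prin_add: "P \<in> Prin H \<Longrightarrow> Q \<in> Prin H \<Longrightarrow> (\<lambda>w. P w + Q w) \<in> Prin H"
  unfolding Prin_def
  apply clarify
  subgoal for c c' by (rule exI[of _ "\<lambda>v. c v + c' v"]) (auto simp: algebra_simps sum.distrib)
  done

lemma Prin_smult: "P \<in> Prin H \<Longrightarrow> (\<lambda>w. k * P w) \<in> Prin H"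
  unfolding Prin_def
  apply clarify
  subgoal for c by (rule exI[of _ "\<lambda>v. k * c v"]) (auto simp: algebra_simps sum_distrib_left)
  done

lemma Prin_neg: "P \<in> Prin H \<Longrightarrow> (\<lambda>w. - P w) \<in> Prin H"
  using Prin_smult[of P H "-1"] by simp

lemma Prin_diff: "P \<in> Prin H \<Longrightarrow> Q \<in> Prin H \<Longrightarrow> (\<lambda>w. P w - Q w) \<in> Prin H"
  using Prin_add[OF _ Prin_neg] by (simp add: algebra_simps) 

lemma Prin_zero: "(\<lambda>w. 0) \<in> Prin H"
  unfolding Prin_def by (rule CollectI, rule exI[of _ "\<lambda>v. 0"]) simp

lemma Prin_sum: "finite I \<Longrightarrow> (\<And>i. i \<in> I \<Longrightarrow> P i \<in> Prin H) \<Longrightarrow> (\<lambda>w. \<Sum>i\<in>I. P i w) \<in> Prin H"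
proof (induction I rule: finite_induct)
  case empty then show ?case using Prin_zero by simp
next
  case (insert x F)
  then show ?case using Prin_add[of "P x" H "\<lambda>w. \<Sum>i\<in>F. P i w"] by simp
qed

lemma Prin_cong: "P \<in> Prin H \<Longrightarrow> (\<And>w. P w = Q w) \<Longrightarrow> Q \<in> Prin H"
proof -
  assume "P \<in> Prin H" "\<And>w. P w = Q w"
  then have "P = Q" by auto
  then show ?thesis using \<open>P \<in> Prin H\<close> by simp
qed

lemma rank_cong:
  assumes "verts H = verts H'" "inum H = inum H'"
  shows "rank H D = rank H' D"
proof -
  have "T H = T H'" using assms unfolding T_def by (intro ext) simp
  then show ?thesis using assms unfolding rank_def effective_def Div_def lin_equiv_def Prin_def deg_def
    by simp
qed




lemma refine_simps:
  "verts (refine G n) = Inl ` verts G \<union> {Inr (e, j) | e j. e \<in> edges G \<and> is_loop G e \<and> 1 \<le> j \<and> j \<le> n e}"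
  "edges (refine G n) = {(e, 0) | e. e \<in> edges G \<and> \<not> is_loop G e} \<union>
             {(e, k) | e k. e \<in> edges G \<and> is_loop G e \<and> k \<le> n e}"
  "src (refine G n) (e, k) = (if is_loop G e \<and> 0 < k then Inr (e, k) else Inl (src G e))"
  "tgt (refine G n) (e, k) = (if is_loop G e \<and> k < n e then Inr (e, Suc k) else Inl (tgt G e))"
  by (simp_all add: refine_def)

locale lp =
  fixes G :: "('v, 'e) mgraph" and n :: "'e \<Rightarrow> nat" and e0 :: 'e
  assumes finV: "finite (verts G)" and finE: "finite (edges G)"
    and ends: "\<forall>e\<in>edges G. src G e \<in> verts G \<and> tgt G e \<in> verts G"
    and e0E: "e0 \<in> edges G" and e0loop: "is_loop G e0" and npos: "0 < n e0"
begin

abbreviation "H \<equiv> refine G n"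
definition "a = (Inl (src G e0) :: 'v + 'e \<times> nat)"
definition "m = n e0"
definition "N = Suc m"
definition "u j = (Inr (e0, j) :: 'v + 'e \<times> nat)"
definition "pos j = (if j = 0 \<or> j = N then a else u j)"
definition "V = verts H"
definition "X = u ` {1..m}"
definition "W = V - X"

lemma m_pos: "1 \<le> m" using npos by (simp add: m_def)

lemma e0tgt: "tgt G e0 = src G e0" using e0loop by (simp add: is_loop_def)

lemma finVH: "finite V"
proof -
  have "{Inr (e, j) | e j. e \<in> edges G \<and> is_loop G e \<and> 1 \<le> j \<and> j \<le> n e}
     \<subseteq> (\<lambda>(e,j). Inr (e,j)) ` (SIGMA e:edges G. {..n e})" by auto
  moreover have "finite ((\<lambda>(e,j). Inr (e,j)) ` (SIGMA e:edges G. {..n e}))"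
    using finE by auto
  ultimately show ?thesis unfolding V_def refine_simps using finV finite_subset by auto
qed

lemma finEH: "finite (edges H)"
proof -
  have "edges H \<subseteq> (SIGMA e:edges G. {..n e})" unfolding refine_simps by auto
  then show ?thesis using finE finite_subset by blast
qed

lemma edges_H: "(e, k) \<in> edges H \<longleftrightarrow> e \<in> edges G \<and> ((\<not> is_loop G e \<and> k = 0) \<or> (is_loop G e \<and> k \<le> n e))"
  unfolding refine_simps by auto

lemma endsH: "\<forall>e\<in>edges H. src H e \<in> V \<and> tgt H e \<in> V"
proof
  fix x assume x: "x \<in> edges H"
  obtain e k where xe: "x = (e,k)" by force
  from x ends show "src H x \<in> V \<and> tgt H x \<in> V"
    unfolding xe V_def refine_simps by (auto simp: is_loop_def)
qed

lemma u_inj: "u i = u j \<longleftrightarrow> i = j" by (simp add: u_def)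
lemma u_ne_a: "u j \<noteq> a" by (simp add: u_def a_def)
lemma a_ne_u: "a \<noteq> u j" by (simp add: u_def a_def)

lemma u_V: "1 \<le> j \<Longrightarrow> j \<le> m \<Longrightarrow> u j \<in> V"
  unfolding V_def refine_simps u_def m_def using e0E e0loop by auto
lemma a_V: "a \<in> V"
  unfolding V_def refine_simps a_def using e0E ends by auto
lemma pos_V: "k \<le> N \<Longrightarrow> pos k \<in> V"
  unfolding pos_def N_def using u_V a_V by auto
lemma a_W: "a \<in> W"
  unfolding W_def X_def using a_V a_ne_u by blast
lemma u_X: "1 \<le> j \<Longrightarrow> j \<le> m \<Longrightarrow> u j \<in> X" unfolding X_def by auto
lemma u_notW: "u j \<notin> W" unfolding W_def X_def V_def refine_simps u_def m_def by auto

lemma pos_eq_u: "k \<le> N \<Longrightarrow> 1 \<le> j \<Longrightarrow> j \<le> m \<Longrightarrow> pos k = u j \<longleftrightarrow> k = j"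
  unfolding pos_def N_def by (auto simp: u_inj u_ne_a a_ne_u)

lemma pos_u: "1 \<le> j \<Longrightarrow> j \<le> m \<Longrightarrow> pos j = u j"
  unfolding pos_def N_def by auto

lemma pos_a: "k \<le> N \<Longrightarrow> pos k = a \<longleftrightarrow> k = 0 \<or> k = N"
  unfolding pos_def by (auto simp: u_ne_a)

lemma src_e0: "k \<le> m \<Longrightarrow> src H (e0, k) = pos k"
  unfolding refine_simps pos_def N_def using e0loop by (auto simp: u_def a_def)

lemma tgt_e0: "k \<le> m \<Longrightarrow> tgt H (e0, k) = pos (Suc k)"
  unfolding refine_simps pos_def N_def using e0loop by (auto simp: u_def a_def m_def e0tgt)

lemma e0_edge: "k \<le> m \<Longrightarrow> (e0, k) \<in> edges H"
  using e0E e0loop by (simp add: edges_H m_def)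

lemma src_u: "x \<in> edges H \<Longrightarrow> 1 \<le> j \<Longrightarrow> src H x = u j \<longleftrightarrow> x = (e0, j)"
proof -
  assume "x \<in> edges H" "1 \<le> j"
  obtain e k where xe: "x = (e,k)" by force
  show ?thesis unfolding xe refine_simps u_def using e0loop \<open>1 \<le> j\<close> by auto
qed

lemma tgt_u: "x \<in> edges H \<Longrightarrow> 1 \<le> j \<Longrightarrow> j \<le> m \<Longrightarrow> tgt H x = u j \<longleftrightarrow> x = (e0, j - 1)"
proof -
  assume "x \<in> edges H" "1 \<le> j" "j \<le> m"
  obtain e k where xe: "x = (e,k)" by force
  show ?thesis unfolding xe refine_simps u_def using e0loop \<open>1 \<le> j\<close> \<open>j \<le> m\<close>
    by (auto simp: m_def)
qed

lemma inum_u: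
  assumes j: "1 \<le> j" "j \<le> m"
  shows "inum H (u j) w = ind (pos (j - 1)) w + ind (pos (Suc j)) w - 2 * ind (u j) w"
proof -
  have E1: "(e0, j) \<in> edges H" "(e0, j - 1) \<in> edges H" using e0_edge j by auto
  have s1: "src H (e0, j) = u j" using src_e0[of j] j pos_u by auto
  have t1: "tgt H (e0, j) = pos (Suc j)" using tgt_e0 j by auto
  have s0: "src H (e0, j - 1) = pos (j - 1)" using src_e0[of "j-1"] j by auto
  have t0: "tgt H (e0, j - 1) = u j" using tgt_e0[of "j-1"] j pos_u by auto
  have pn: "pos (Suc j) \<noteq> u j" using pos_eq_u[of "Suc j" j] j by (simp add: N_def)
  have pp: "pos (j - 1) \<noteq> u j" using pos_eq_u[of "j - 1" j] j by (simp add: N_def)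
  have ne: "(e0, j) \<noteq> (e0, j - 1)" using j by auto
  show ?thesis
  proof (cases "w = u j")
    case True
    have l: "{e \<in> edges H. src H e = u j \<and> tgt H e = u j} = {}"
      using src_u[of _ j] j t1 pn by auto
    have c1: "{e \<in> edges H. src H e = u j \<and> tgt H e \<noteq> u j} = {(e0, j)}"
      using src_u[of _ j] j t1 pn E1 s1 by auto
    have c2: "{e \<in> edges H. tgt H e = u j \<and> src H e \<noteq> u j} = {(e0, j - 1)}"
      using tgt_u[of _ j] j s0 pp E1 t0 by auto
    show ?thesis using True pn pp
      by (simp add: inum_def val_def loopnum_def l c1 c2 ind_def)
  next
    case False
    have "{e \<in> edges H. {src H e, tgt H e} = {u j, w}} =
          (if pos (Suc j) = w then {(e0, j)} else {}) \<union> (if pos (j - 1) = w then {(e0, j - 1)} else {})"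
      (is "?L = ?R")
    proof
      show "?L \<subseteq> ?R"
      proof
        fix x assume x: "x \<in> ?L"
        then have xE: "x \<in> edges H" by simp
        from x False have "(src H x = u j \<and> tgt H x = w) \<or> (tgt H x = u j \<and> src H x = w)"
          by (auto simp: doubleton_eq_iff)
        then show "x \<in> ?R"
        proof
          assume "src H x = u j \<and> tgt H x = w"
          then show ?thesis using src_u[OF xE, of j] j t1 by auto
        next
          assume "tgt H x = u j \<and> src H x = w"
          then show ?thesis using tgt_u[OF xE, of j] j s0 by auto
        qed
      qed
      show "?R \<subseteq> ?L" using E1 s1 t1 s0 t0 by (auto simp: insert_commute)
    qed
    then show ?thesis using False ne
      by (auto simp: inum_def ind_def card_insert_if)
  qed
qed

end



context lp begin

lemma finW: "finite W" using finVH by (simp add: W_def)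

lemma V_split: "V = W \<union> X" "W \<inter> X = {}" "X \<subseteq> V"
  using u_V by (auto simp: W_def X_def)

lemma sumV: "(\<Sum>w\<in>V. f w) = (\<Sum>w\<in>W. f w) + (\<Sum>j=1..m. f (u j))"
proof -
  have "(\<Sum>w\<in>V. f w) = (\<Sum>w\<in>W. f w) + (\<Sum>w\<in>X. f w)"
    using V_split finVH sum.union_disjoint[of W X f] finW
    by (metis finite_Un)
  moreover have "(\<Sum>w\<in>X. f w) = (\<Sum>j=1..m. f (u j))"
    unfolding X_def by (rule sum.reindex_cong[where l=u]) (auto simp: inj_on_def u_inj)
  ultimately show ?thesis by simp
qed

lemma sumW_a: "(\<And>v. v \<in> W \<Longrightarrow> v \<noteq> a \<Longrightarrow> f v = 0) \<Longrightarrow> (\<Sum>v\<in>W. f v) = f a"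
  using finW a_W by (simp add: sum.remove sum.neutral)

lemma pos_cases: "k \<le> N \<Longrightarrow> pos k = a \<or> (\<exists>i. 1 \<le> i \<and> i \<le> m \<and> pos k = u i)"
proof -
  assume k: "k \<le> N"
  show ?thesis
  proof (cases "k = 0 \<or> k = N")
    case True then show ?thesis by (simp add: pos_def)
  next
    case False then have "1 \<le> k" "k \<le> m" "pos k = u k" using k by (auto simp: pos_def N_def)
    then show ?thesis by blast
  qed
qed

lemma pos_notW: "k \<le> N \<Longrightarrow> v \<in> W \<Longrightarrow> v \<noteq> a \<Longrightarrow> pos k \<noteq> v"
proof
  assume k: "k \<le> N" and v: "v \<in> W" "v \<noteq> a" and p: "pos k = v"
  from pos_cases[OF k] show False
  proof
    assume "pos k = a" then show False using p v by simp
  next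
    assume "\<exists>i. 1 \<le> i \<and> i \<le> m \<and> pos k = u i"
    then obtain i where "pos k = u i" by blast
    then show False using p v u_notW by metis
  qed
qed

lemma T_u: "1 \<le> j \<Longrightarrow> j \<le> m \<Longrightarrow>
   T H (u j) w = ind (pos (j - 1)) w + ind (pos (Suc j)) w - 2 * ind (u j) w"
proof -
  assume j: "1 \<le> j" "j \<le> m"
  have "pos (j - 1) \<in> V" "pos (Suc j) \<in> V" "u j \<in> V"
    using pos_V u_V j by (auto simp: N_def)
  then show ?thesis using inum_u[OF j] unfolding T_def V_def by (auto simp: ind_def)
qed

lemma inum_u_W: "1 \<le> j \<Longrightarrow> j \<le> m \<Longrightarrow> v \<in> W \<Longrightarrow> v \<noteq> a \<Longrightarrow> inum H (u j) v = 0"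
proof -
  assume j: "1 \<le> j" "j \<le> m" and v: "v \<in> W" "v \<noteq> a"
  have "pos (j - 1) \<noteq> v" "pos (Suc j) \<noteq> v" using pos_notW v j by (auto simp: N_def)
  moreover have "u j \<noteq> v" using u_notW v by metis
  ultimately show ?thesis using inum_u[OF j, of v] by (simp add: ind_def)
qed

lemma T_W_u: "1 \<le> j \<Longrightarrow> j \<le> m \<Longrightarrow> v \<in> W \<Longrightarrow> v \<noteq> a \<Longrightarrow> T H v (u j) = 0"
  using inum_u_W[of j v] inum_sym[of H v "u j"] u_V[of j] by (simp add: T_def V_def)

lemma T_u_W: "1 \<le> j \<Longrightarrow> j \<le> m \<Longrightarrow> v \<in> W \<Longrightarrow> v \<noteq> a \<Longrightarrow> T H (u j) v = 0"
  using inum_u_W by (simp add: T_def V_def)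

lemma T_sym: "v \<in> V \<Longrightarrow> w \<in> V \<Longrightarrow> T H v w = T H w v"
  using inum_sym by (simp add: T_def V_def)

lemma T_out: "w \<notin> V \<Longrightarrow> T H v w = 0" by (simp add: T_def V_def)

lemma row_zero: "v \<in> V \<Longrightarrow> (\<Sum>w\<in>V. T H v w) = 0"
  using row_sum_zero[of H v] finVH finEH endsH by (simp add: T_def V_def)

definition "rho F w = F w + (if w = a then (\<Sum>j=1..m. F (u j)) else 0)"
definition "kap F = (\<Sum>j=1..m. int j * F (u j))"
definition "L v w = rho (T H v) w"

lemma sum_pos: "k \<le> N \<Longrightarrow> (\<Sum>j=1..m. f j * ind (pos k) (u j)) = (if 1 \<le> k \<and> k \<le> m then f k else 0)"
proof -
  assume k: "k \<le> N"
  have "(\<Sum>j=1..m. f j * ind (pos k) (u j)) = (\<Sum>j=1..m. if j = k then f j else 0)"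
  proof (rule sum.cong)
    fix j assume "j \<in> {1..m}"
    then show "f j * ind (pos k) (u j) = (if j = k then f j else 0)"
      using pos_eq_u[OF k, of j] by (auto simp: ind_def)
  qed simp
  then show ?thesis by (simp add: sum.delta)
qed

lemma sum_uu: "1 \<le> i \<Longrightarrow> i \<le> m \<Longrightarrow> (\<Sum>j=1..m. f j * ind (u i) (u j)) = f i"
proof -
  assume i: "1 \<le> i" "i \<le> m"
  have "(\<Sum>j=1..m. f j * ind (u i) (u j)) = (\<Sum>j=1..m. if j = i then f j else 0)"
    by (rule sum.cong) (auto simp: ind_def u_inj)
  then show ?thesis using i by (simp add: sum.delta)
qed

lemma V_cases: "v \<in> V \<Longrightarrow> (v \<in> W \<and> v \<noteq> a) \<or> v = a \<or> (\<exists>i. 1 \<le> i \<and> i \<le> m \<and> v = u i)"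
proof -
  assume v: "v \<in> V"
  show ?thesis
  proof (cases "v \<in> W")
    case False
    then have "v \<in> X" using v by (simp add: W_def)
    then show ?thesis unfolding X_def by auto
  qed simp
qed

lemma T_a_u: "1 \<le> j \<Longrightarrow> j \<le> m \<Longrightarrow> T H a (u j) = ind (u 1) (u j) + ind (u m) (u j)"
proof -
  assume j: "1 \<le> j" "j \<le> m"
  have "T H a (u j) = T H (u j) a" using a_V u_V j by (intro T_sym) auto
  also have "\<dots> = ind (pos (j - 1)) a + ind (pos (Suc j)) a" using T_u[OF j] by (simp add: ind_def a_ne_u)
  finally have 1: "T H a (u j) = ind (pos (j - 1)) a + ind (pos (Suc j)) a" .
  have 2: "ind (pos (j - 1)) a = ind (u 1) (u j)"
    using j by (cases "j = 1") (auto simp: ind_def pos_def N_def u_ne_a a_ne_u u_inj)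
  have 3: "ind (pos (Suc j)) a = ind (u m) (u j)"
    using j by (cases "j = m") (auto simp: ind_def pos_def N_def u_ne_a a_ne_u u_inj)
  show ?thesis using 1 2 3 by simp
qed

lemma kap_T_a: "kap (T H a) = int N"
proof -
  have "kap (T H a) = (\<Sum>j=1..m. int j * ind (u 1) (u j) + int j * ind (u m) (u j))"
    unfolding kap_def by (rule sum.cong) (auto simp: T_a_u algebra_simps)
  also have "\<dots> = (\<Sum>j=1..m. int j * ind (u 1) (u j)) + (\<Sum>j=1..m. int j * ind (u m) (u j))"
    by (rule sum.distrib)
  also have "(\<Sum>j=1..m. int j * ind (u 1) (u j)) = 1" using sum_uu[of 1 int] m_pos by simp
  also have "(\<Sum>j=1..m. int j * ind (u m) (u j)) = int m" using sum_uu[of m int] m_pos by simp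
  finally show ?thesis by (simp add: N_def)
qed

lemma kap_T_u: "1 \<le> i \<Longrightarrow> i \<le> m \<Longrightarrow> kap (T H (u i)) = (if i = m then - int N else 0)"
proof -
  assume i: "1 \<le> i" "i \<le> m"
  have "kap (T H (u i)) = (\<Sum>j=1..m. int j * ind (pos (i - 1)) (u j) + int j * ind (pos (Suc i)) (u j)
        - 2 * (int j * ind (u i) (u j)))"
    unfolding kap_def T_u[OF i] by (intro sum.cong) (auto simp: algebra_simps)
  also have "\<dots> = (\<Sum>j=1..m. int j * ind (pos (i - 1)) (u j)) + (\<Sum>j=1..m. int j * ind (pos (Suc i)) (u j))
        - 2 * (\<Sum>j=1..m. int j * ind (u i) (u j))"
    by (simp add: sum.distrib sum_subtractf sum_distrib_left)
  also have "(\<Sum>j=1..m. int j * ind (pos (i - 1)) (u j)) = int (i - 1)"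
    using sum_pos[of "i - 1" int] i by (cases "i = 1") (auto simp: N_def)
  also have "(\<Sum>j=1..m. int j * ind (pos (Suc i)) (u j)) = (if Suc i \<le> m then int (Suc i) else 0)"
    using sum_pos[of "Suc i" int] i by (simp add: N_def)
  also have "(\<Sum>j=1..m. int j * ind (u i) (u j)) = int i" using sum_uu[OF i, of int] by simp
  finally show ?thesis using i by (auto simp: N_def)
qed

lemma kap_T: "v \<in> V \<Longrightarrow> int N dvd kap (T H v)"
proof -
  assume v: "v \<in> V"
  from V_cases[OF v] show ?thesis
  proof (elim disjE exE conjE)
    assume "v \<in> W" "v \<noteq> a"
    then have "kap (T H v) = 0" unfolding kap_def using T_W_u by simp
    then show ?thesis by simp
  next
    assume "v = a" then show ?thesis using kap_T_a by simp
  next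
    fix i assume "1 \<le> i" "i \<le> m" "v = u i"
    then show ?thesis using kap_T_u by simp
  qed
qed

end



context lp begin

lemma Prin_V: "P \<in> Prin H \<longleftrightarrow> (\<exists>c. P = (\<lambda>w. \<Sum>v\<in>V. c v * T H v w))"
  by (simp add: Prin_def V_def)

lemma kap_Prin: "P \<in> Prin H \<Longrightarrow> int N dvd kap P"
proof -
  assume "P \<in> Prin H"
  then obtain c where P: "P = (\<lambda>w. \<Sum>v\<in>V. c v * T H v w)" by (auto simp: Prin_V)
  have "kap P = (\<Sum>v\<in>V. c v * kap (T H v))"
    unfolding P kap_def by (simp add: sum_distrib_left sum.swap[of _ V] algebra_simps)
  also have "int N dvd \<dots>"
    by (rule dvd_sum) (use kap_T in auto)
  finally show ?thesis .
qed

lemma rho_lin: "rho (\<lambda>w. \<Sum>v\<in>V. c v * T H v w) w = (\<Sum>v\<in>V. c v * rho (T H v) w)"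
  unfolding rho_def by (simp add: sum_distrib_left sum.swap[of _ V] algebra_simps sum.distrib)

lemma rho_T_u: "1 \<le> j \<Longrightarrow> j \<le> m \<Longrightarrow> w \<in> W \<Longrightarrow> rho (T H (u j)) w = 0"
proof -
  assume j: "1 \<le> j" "j \<le> m" and w: "w \<in> W"
  show ?thesis
  proof (cases "w = a")
    case True
    have "(\<Sum>w\<in>V. T H (u j) w) = 0" using row_zero u_V j by auto
    moreover have "(\<Sum>w\<in>W. T H (u j) w) = T H (u j) a" by (rule sumW_a) (use T_u_W j in auto)
    ultimately show ?thesis using True unfolding rho_def sumV by simp
  next
    case False
    then show ?thesis using T_u_W j w by (simp add: rho_def)
  qed
qed

lemma L_row: "v \<in> W \<Longrightarrow> (\<Sum>w\<in>W. L v w) = 0"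
proof -
  assume v: "v \<in> W"
  have "(\<Sum>w\<in>W. L v w) = (\<Sum>w\<in>W. T H v w) + (\<Sum>w\<in>W. if w = a then (\<Sum>j=1..m. T H v (u j)) else 0)"
    unfolding L_def rho_def by (simp add: sum.distrib)
  also have "(\<Sum>w\<in>W. if w = a then (\<Sum>j=1..m. T H v (u j)) else 0) = (\<Sum>j=1..m. T H v (u j))"
    using finW a_W by (simp add: sum.delta)
  also have "(\<Sum>w\<in>W. T H v w) + (\<Sum>j=1..m. T H v (u j)) = (\<Sum>w\<in>V. T H v w)" by (simp add: sumV)
  also have "\<dots> = 0" using row_zero v by (simp add: W_def)
  finally show ?thesis .
qed

lemma L_off: "v \<in> W \<Longrightarrow> w \<in> W \<Longrightarrow> v \<noteq> w \<Longrightarrow> L v w = inum H v w"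
proof -
  assume v: "v \<in> W" and w: "w \<in> W" and vw: "v \<noteq> w"
  have wV: "w \<in> V" using w by (simp add: W_def)
  show ?thesis
  proof (cases "w = a")
    case True
    then have "v \<noteq> a" using vw by simp
    then have "(\<Sum>j=1..m. T H v (u j)) = 0" using T_W_u v by simp
    then show ?thesis using wV True by (simp add: L_def rho_def T_def V_def)
  next
    case False
    then show ?thesis using wV by (simp add: L_def rho_def T_def V_def)
  qed
qed

lemma L_diag: "v \<in> W \<Longrightarrow> L v v = - (\<Sum>w\<in>W - {v}. L v w)"
  using L_row[of v] finW by (simp add: sum.remove)

lemma comb_W:
  assumes w: "w \<in> W"
  shows "(\<Sum>v\<in>V. (if v \<in> X then c a else c v) * T H v w) = (\<Sum>v\<in>W. c v * L v w)"
proof -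
  have X: "u j \<in> X" if "j \<in> {1..m}" for j using that u_X by auto
  have "(\<Sum>v\<in>V. (if v \<in> X then c a else c v) * T H v w) =
        (\<Sum>v\<in>W. c v * T H v w) + (\<Sum>j=1..m. c a * T H (u j) w)"
    unfolding sumV using X u_notW by (auto intro!: sum.cong simp: W_def)
  also have "(\<Sum>j=1..m. c a * T H (u j) w) = (if w = a then c a * (\<Sum>j=1..m. T H a (u j)) else 0)"
  proof (cases "w = a")
    case True
    have "T H (u j) a = T H a (u j)" if "j \<in> {1..m}" for j using that u_V a_V by (intro T_sym) auto
    then show ?thesis using True by (simp add: sum_distrib_left)
  next
    case False
    then show ?thesis using T_u_W w by simp
  qed
  also have "(if w = a then c a * (\<Sum>j=1..m. T H a (u j)) else 0) =
      (\<Sum>v\<in>W. c v * (if w = a then (\<Sum>j=1..m. T H v (u j)) else 0))"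
  proof (cases "w = a")
    case True
    have "(\<Sum>v\<in>W. c v * (\<Sum>j=1..m. T H v (u j))) = c a * (\<Sum>j=1..m. T H a (u j))"
      by (rule sumW_a) (use T_W_u in auto)
    then show ?thesis using True by simp
  qed simp
  finally show ?thesis
    unfolding L_def rho_def by (simp add: algebra_simps sum.distrib)
qed

lemma comb_X:
  assumes i: "1 \<le> i" "i \<le> m"
  shows "(\<Sum>v\<in>V. (if v \<in> X then c a else c v) * T H v (u i)) = 0"
proof -
  have X: "u j \<in> X" if "j \<in> {1..m}" for j using that u_X by auto
  have "(\<Sum>v\<in>V. (if v \<in> X then c a else c v) * T H v (u i)) =
        (\<Sum>v\<in>W. c v * T H v (u i)) + (\<Sum>j=1..m. c a * T H (u j) (u i))"
    unfolding sumV using X u_notW by (auto intro!: sum.cong simp: W_def)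
  also have "(\<Sum>v\<in>W. c v * T H v (u i)) = c a * T H a (u i)"
    by (rule sumW_a) (use T_W_u i in auto)
  also have "c a * T H a (u i) + (\<Sum>j=1..m. c a * T H (u j) (u i)) =
     c a * ((\<Sum>v\<in>W. T H v (u i)) + (\<Sum>j=1..m. T H (u j) (u i)))"
    using sumW_a[of "\<lambda>v. T H v (u i)"] T_W_u i by (simp add: sum_distrib_left algebra_simps)
  also have "(\<Sum>v\<in>W. T H v (u i)) + (\<Sum>j=1..m. T H (u j) (u i)) = (\<Sum>v\<in>V. T H v (u i))"
    by (simp add: sumV)
  also have "\<dots> = (\<Sum>v\<in>V. T H (u i) v)"
    by (rule sum.cong) (use T_sym u_V i in auto)
  also have "\<dots> = 0" using row_zero u_V i by auto
  finally show ?thesis by simp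
qed

end



context lp begin

definition "hh w = ind (u 1) w - ind a w"
definition "gg j w = ind a w + int j * hh w"

lemma PT: "v \<in> V \<Longrightarrow> T H v \<in> Prin H"
  using Prin_T finVH by (simp add: V_def)

lemma pos_g_step: "Suc j \<le> N \<Longrightarrow> (\<lambda>w. ind (pos j) w - gg j w) \<in> Prin H \<and>
     (\<lambda>w. ind (pos (Suc j)) w - gg (Suc j) w) \<in> Prin H"
proof (induction j)
  case 0
  have p0: "pos 0 = a" by (simp add: pos_def)
  have p1: "pos (Suc 0) = u (Suc 0)" using m_pos by (simp add: pos_def N_def)
  show ?case using Prin_zero
    by (simp add: p0 p1 gg_def hh_def)
next
  case (Suc j)
  then have IH: "(\<lambda>w. ind (pos j) w - gg j w) \<in> Prin H"
    "(\<lambda>w. ind (pos (Suc j)) w - gg (Suc j) w) \<in> Prin H" by auto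
  have j: "1 \<le> Suc j" "Suc j \<le> m" using Suc.prems by (auto simp: N_def)
  have TT: "T H (u (Suc j)) \<in> Prin H" using PT u_V j by auto
  have pu: "pos (Suc j) = u (Suc j)" using pos_u j by auto
  have S: "(\<lambda>w. T H (u (Suc j)) w - (ind (pos j) w - gg j w) + 2 * (ind (pos (Suc j)) w - gg (Suc j) w)) \<in> Prin H"
    using Prin_add[OF Prin_diff[OF TT IH(1)] Prin_smult[OF IH(2), of 2]] by simp
  have "(\<lambda>w. ind (pos (Suc (Suc j))) w - gg (Suc (Suc j)) w) \<in> Prin H"
  proof (rule Prin_cong[OF S])
    fix w
    show "T H (u (Suc j)) w - (ind (pos j) w - gg j w) + 2 * (ind (pos (Suc j)) w - gg (Suc j) w) =
      ind (pos (Suc (Suc j))) w - gg (Suc (Suc j)) w"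
      using T_u[OF j, of w] pu by (simp add: gg_def algebra_simps)
  qed
  then show ?case using IH by simp
qed

lemma pos_g: "j \<le> N \<Longrightarrow> (\<lambda>w. ind (pos j) w - gg j w) \<in> Prin H"
proof -
  assume j: "j \<le> N"
  show ?thesis
  proof (cases j)
    case 0 then show ?thesis using pos_g_step[of 0] by (simp add: N_def)
  next
    case (Suc k) then show ?thesis using pos_g_step[of k] j by simp
  qed
qed

lemma Nh: "(\<lambda>w. int N * hh w) \<in> Prin H"
proof -
  have "(\<lambda>w. - (ind (pos N) w - gg N w)) \<in> Prin H" using Prin_neg[OF pos_g[of N]] by simp
  then show ?thesis by (rule Prin_cong) (simp add: pos_def gg_def)
qed

definition "rr F = nat (kap F mod int N)"
definition "NF F w = (if w \<in> W then rho F w else 0) - ind a w + ind (pos (rr F)) w"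

lemma rr_lt: "rr F < N"
proof -
  have "0 < int N" by (simp add: N_def)
  then show ?thesis unfolding rr_def by (simp add: nat_less_iff)
qed

lemma normalize:
  assumes F: "F \<in> Div H"
  shows "(\<lambda>w. F w - NF F w) \<in> Prin H"
proof -
  define r where "r = rr F"
  define q where "q = kap F div int N"
  have kr: "kap F = q * int N + int r"
  proof -
    have "0 \<le> kap F mod int N" by (simp add: N_def)
    then have "int r = kap F mod int N" unfolding r_def rr_def by simp
    then show ?thesis unfolding q_def by simp
  qed
  have A: "(\<lambda>w. \<Sum>j\<in>{1..m}. F (u j) * (ind (pos j) w - gg j w)) \<in> Prin H"
  proof (rule Prin_sum)
    fix j assume "j \<in> {1..m}"
    then have "j \<le> N" by (simp add: N_def)
    then show "(\<lambda>w. F (u j) * (ind (pos j) w - gg j w)) \<in> Prin H"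
      using Prin_smult[OF pos_g] by blast
  qed simp
  have B: "(\<lambda>w. q * (int N * hh w)) \<in> Prin H" using Prin_smult[OF Nh] by simp
  have C: "(\<lambda>w. - (ind (pos r) w - gg r w)) \<in> Prin H"
    using Prin_neg[OF pos_g[of r]] rr_lt[of F] by (simp add: r_def)
  have S: "(\<lambda>w. (\<Sum>j\<in>{1..m}. F (u j) * (ind (pos j) w - gg j w)) + q * (int N * hh w) + - (ind (pos r) w - gg r w)) \<in> Prin H"
    using Prin_add[OF Prin_add[OF A B] C] by simp
  show ?thesis
  proof (rule Prin_cong[OF S])
    fix w
    have pu: "\<And>j. j \<in> {1..m} \<Longrightarrow> pos j = u j" using pos_u by auto
    have s1: "(\<Sum>j\<in>{1..m}. F (u j) * (ind (pos j) w - gg j w)) =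
       (\<Sum>j\<in>{1..m}. F (u j) * ind (u j) w) - (\<Sum>j\<in>{1..m}. F (u j)) * ind a w - kap F * hh w"
      by (simp add: pu gg_def kap_def algebra_simps sum_subtractf sum.distrib sum_distrib_left sum_distrib_right)
    have dec: "F w = (if w \<in> W then F w else 0) + (\<Sum>j\<in>{1..m}. F (u j) * ind (u j) w)"
    proof (cases "w \<in> W")
      case True
      then have "\<And>j. ind (u j) w = 0" using u_notW by (auto simp: ind_def)
      then show ?thesis using True by simp
    next
      case False
      show ?thesis
      proof (cases "w \<in> V")
        case True
        with False obtain i where i: "i \<in> {1..m}" "w = u i" by (auto simp: W_def X_def)
        have "(\<Sum>j\<in>{1..m}. F (u j) * ind (u j) w) = (\<Sum>j\<in>{1..m}. if j = i then F (u j) else 0)"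
          by (rule sum.cong) (auto simp: i ind_def u_inj)
        then show ?thesis using False i by simp
      next
        case nV: False
        then have "F w = 0" using F by (simp add: Div_def V_def)
        moreover have "\<And>j. j \<in> {1..m} \<Longrightarrow> ind (u j) w = 0" using nV u_V by (auto simp: ind_def)
        ultimately show ?thesis using False by simp
      qed
    qed
    have nf: "NF F w = (if w \<in> W then F w else 0) + ind a w * (\<Sum>j\<in>{1..m}. F (u j)) - ind a w + ind (pos r) w"
      unfolding NF_def r_def rho_def using a_W by (auto simp: ind_def)
    show "(\<Sum>j\<in>{1..m}. F (u j) * (ind (pos j) w - gg j w)) + q * (int N * hh w) + - (ind (pos r) w - gg r w) =
       F w - NF F w"
      unfolding s1 nf using dec kr by (simp add: gg_def algebra_simps)
  qed
qed

end



definition PhiW :: "'x set \<Rightarrow> ('x \<Rightarrow> 'x \<Rightarrow> int) \<Rightarrow> ('x \<Rightarrow> int) \<Rightarrow> bool" where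
  "PhiW W L Q \<longleftrightarrow> (\<exists>c. \<forall>w\<in>W. 0 \<le> Q w + (\<Sum>v\<in>W. c v * L v w))"

definition PsiW :: "'x set \<Rightarrow> ('x \<Rightarrow> 'x \<Rightarrow> int) \<Rightarrow> 'x \<Rightarrow> ('x \<Rightarrow> int) \<Rightarrow> nat \<Rightarrow> bool" where
  "PsiW W L a D k \<longleftrightarrow> (\<forall>P. (\<forall>w. w \<notin> W \<longrightarrow> P w = 0) \<and> (\<forall>w. 0 \<le> P w) \<and> (\<Sum>w\<in>W. P w) = int k \<longrightarrow>
      PhiW W L (\<lambda>w. D w - P w) \<and> (1 \<le> P a \<longrightarrow> PhiW W L (\<lambda>w. D w - P w - ind a w)))"

lemma PhiW_cong: "(\<And>w. w \<in> W \<Longrightarrow> Q w = Q' w) \<Longrightarrow> PhiW W L Q = PhiW W L Q'"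
  unfolding PhiW_def by auto

lemma PhiW_congL: "(\<And>v w. v \<in> W \<Longrightarrow> w \<in> W \<Longrightarrow> L v w = L' v w) \<Longrightarrow> PhiW W L Q = PhiW W L' Q"
proof -
  assume h: "\<And>v w. v \<in> W \<Longrightarrow> w \<in> W \<Longrightarrow> L v w = L' v w"
  have "\<And>c w. w \<in> W \<Longrightarrow> (\<Sum>v\<in>W. c v * L v w) = (\<Sum>v\<in>W. c v * L' v w)"
    using h by (intro sum.cong) auto
  then show ?thesis unfolding PhiW_def by (simp cong: ball_cong)
qed

lemma PsiW_congL: "(\<And>v w. v \<in> W \<Longrightarrow> w \<in> W \<Longrightarrow> L v w = L' v w) \<Longrightarrow> PsiW W L a D k = PsiW W L' a D k"
  unfolding PsiW_def using PhiW_congL[of W L L'] by simp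

context lp begin

lemma rho_diff: fixes F F' :: "'v + 'e \<times> nat \<Rightarrow> int" shows "rho (\<lambda>v. F v - F' v) w = rho F w - rho F' w"
proof -
  have "(\<Sum>j=1..m. F (u j) - F' (u j)) = (\<Sum>j=1..m. F (u j)) - (\<Sum>j=1..m. F' (u j))"
    by (rule sum_subtractf)
  then show ?thesis unfolding rho_def by simp
qed

lemma kap_diff: fixes F F' :: "'v + 'e \<times> nat \<Rightarrow> int" shows "kap (\<lambda>v. F v - F' v) = kap F - kap F'"
  unfolding kap_def by (simp add: sum_subtractf algebra_simps)

lemma rr0: "rr F = 0 \<longleftrightarrow> int N dvd kap F"
proof -
  have "0 \<le> kap F mod int N" by (simp add: N_def)
  then show ?thesis unfolding rr_def by (auto simp: dvd_eq_mod_eq_0)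
qed

lemma kap_ne: "\<not> int N dvd kap F \<Longrightarrow> \<exists>j\<in>{1..m}. F (u j) \<noteq> 0"
proof (rule ccontr)
  assume "\<not> int N dvd kap F" "\<not> (\<exists>j\<in>{1..m}. F (u j) \<noteq> 0)"
  then have "kap F = 0" unfolding kap_def by simp
  then show False using \<open>\<not> int N dvd kap F\<close> by simp
qed

lemma sum_u_ge1: fixes F :: "'v + 'e \<times> nat \<Rightarrow> int" shows "(\<forall>j\<in>{1..m}. 0 \<le> F (u j)) \<Longrightarrow> j \<in> {1..m} \<Longrightarrow> F (u j) \<noteq> 0 \<Longrightarrow> 1 \<le> (\<Sum>j=1..m. F (u j))"
proof -
  assume h: "\<forall>j\<in>{1..m}. 0 \<le> F (u j)" and j: "j \<in> {1..m}" "F (u j) \<noteq> 0"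
  have "F (u j) \<le> (\<Sum>j=1..m. F (u j))"
    by (rule member_le_sum[of j "{1..m}" "\<lambda>j. F (u j)"]) (use h j in auto)
  then show ?thesis using h j by force
qed

lemma L_char:
  assumes F: "F \<in> Div H"
  shows "(\<exists>F'. effective H F' \<and> lin_equiv H F' F) \<longleftrightarrow>
    PhiW W L (\<lambda>w. rho F w - (if int N dvd kap F then 0 else ind a w))"
proof
  assume "\<exists>F'. effective H F' \<and> lin_equiv H F' F"
  then obtain F' where F': "effective H F'" "(\<lambda>v. F' v - F v) \<in> Prin H" by (auto simp: lin_equiv_def)
  then obtain c where c: "(\<lambda>v. F' v - F v) = (\<lambda>w. \<Sum>v\<in>V. c v * T H v w)" by (auto simp: Prin_V)
  have nn: "\<And>w. 0 \<le> F' w" using F' by (simp add: effective_def)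
  have rl: "rho F' w = rho F w + (\<Sum>v\<in>W. c v * L v w)" if w: "w \<in> W" for w
  proof -
    have "rho F' w - rho F w = rho (\<lambda>v. F' v - F v) w" by (simp add: rho_diff)
    also have "\<dots> = (\<Sum>v\<in>V. c v * rho (T H v) w)" unfolding c by (rule rho_lin)
    also have "\<dots> = (\<Sum>v\<in>W. c v * L v w)" unfolding sumV using rho_T_u w by (simp add: L_def)
    finally show ?thesis by simp
  qed
  have kk: "int N dvd kap F' - kap F"
    using kap_Prin[OF F'(2)] by (simp add: kap_diff)
  show "PhiW W L (\<lambda>w. rho F w - (if int N dvd kap F then 0 else ind a w))"
    unfolding PhiW_def
  proof (rule exI[of _ c], intro ballI)
    fix w assume w: "w \<in> W"
    have "0 \<le> rho F' w - (if int N dvd kap F then 0 else ind a w)"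
    proof (cases "int N dvd kap F \<or> w \<noteq> a")
      case True
      have "0 \<le> (\<Sum>j=1..m. F' (u j))" using nn by (simp add: sum_nonneg)
      then have "0 \<le> rho F' w" using nn by (simp add: rho_def)
      then show ?thesis using True by (auto simp: ind_def)
    next
      case False
      have "\<not> int N dvd kap F'"
      proof
        assume "int N dvd kap F'"
        then have "int N dvd kap F' - (kap F' - kap F)" using kk by (rule dvd_diff)
        then show False using False by simp
      qed
      then obtain j where "j \<in> {1..m}" "F' (u j) \<noteq> 0" using kap_ne by blast
      then have "1 \<le> (\<Sum>j=1..m. F' (u j))" using sum_u_ge1[of F'] nn by blast
      then show ?thesis using False nn[of a] by (simp add: rho_def ind_def)
    qed
    then show "0 \<le> rho F w - (if int N dvd kap F then 0 else ind a w) + (\<Sum>v\<in>W. c v * L v w)"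
      using rl[OF w] by simp
  qed
next
  assume "PhiW W L (\<lambda>w. rho F w - (if int N dvd kap F then 0 else ind a w))"
  then obtain c where c: "\<And>w. w \<in> W \<Longrightarrow> 0 \<le> rho F w - (if int N dvd kap F then 0 else ind a w) + (\<Sum>v\<in>W. c v * L v w)"
    unfolding PhiW_def by blast
  define c' where "c' v = (if v \<in> X then c a else c v)" for v
  define F'' where "F'' w = NF F w + (\<Sum>v\<in>V. c' v * T H v w)" for w
  have P1: "(\<lambda>w. \<Sum>v\<in>V. c' v * T H v w) \<in> Prin H" by (auto simp: Prin_V)
  have "(\<lambda>w. - (F w - NF F w) + (\<Sum>v\<in>V. c' v * T H v w)) \<in> Prin H"
    using Prin_add[OF Prin_neg[OF normalize[OF F]] P1] by simp
  then have lin: "lin_equiv H F'' F"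
    unfolding lin_equiv_def by (rule Prin_cong) (simp add: F''_def)
  have r_lt: "rr F < N" by (rule rr_lt)
  have effF: "effective H F''"
    unfolding effective_def Div_def
  proof (intro conjI allI impI CollectI)
    fix w assume w: "w \<notin> verts H"
    then have "w \<notin> V" by (simp add: V_def)
    moreover have "pos (rr F) \<in> V" using pos_V r_lt by simp
    ultimately have "w \<noteq> pos (rr F)" "w \<noteq> a" "w \<notin> W" "w \<notin> V" using a_V by (auto simp: W_def)
    then show "F'' w = 0"
      by (simp add: F''_def NF_def T_out ind_def)
  next
    fix w
    show "0 \<le> F'' w"
    proof (cases "w \<in> V")
      case False
      moreover have "pos (rr F) \<in> V" using pos_V r_lt by simp
      ultimately have "w \<noteq> pos (rr F)" "w \<noteq> a" "w \<notin> W" "w \<notin> V" using a_V by (auto simp: W_def)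
      then show ?thesis
        by (simp add: F''_def NF_def T_out ind_def)
    next
      case True
      show ?thesis
      proof (cases "w \<in> W")
        case wW: True
        have e: "F'' w = rho F w - ind a w + ind (pos (rr F)) w + (\<Sum>v\<in>W. c v * L v w)"
          unfolding F''_def NF_def c'_def using comb_W[OF wW, of c] wW by simp
        show ?thesis
        proof (cases "rr F = 0")
          case True
          then have "int N dvd kap F" using rr0 by simp
          then show ?thesis using e c[OF wW] True by (simp add: pos_def)
        next
          case False
          then have nd: "\<not> int N dvd kap F" using rr0 by simp
          have "pos (rr F) = u (rr F)" using False r_lt by (simp add: pos_def)
          then have "ind (pos (rr F)) w = 0" using u_notW wW by (auto simp: ind_def)
          then show ?thesis using e c[OF wW] nd by simp
        qed
      next
        case False
        with True obtain i where i: "1 \<le> i" "i \<le> m" "w = u i" by (auto simp: W_def X_def)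
        have "F'' w = ind (pos (rr F)) w"
          unfolding F''_def NF_def c'_def using comb_X[OF i(1,2), of c] i u_notW u_ne_a
          by (simp add: ind_def)
        then show ?thesis by (simp add: ind_def)
      qed
    qed
  qed
  show "\<exists>F'. effective H F' \<and> lin_equiv H F' F" using effF lin by blast
qed

end



context lp begin

abbreviation "sD D \<equiv> (sigma_ext D :: 'v + 'e \<times> nat \<Rightarrow> int)"

lemma sD_Div: "D \<in> Div G \<Longrightarrow> sD D \<in> Div H"
  unfolding Div_def refine_simps by (auto simp: sigma_ext_def split: sum.splits)

lemma sD_u: "sD D (u j) = 0" by (simp add: sigma_ext_def u_def)

lemma rho_sD: "rho (sD D) w = sD D w" by (simp add: rho_def sD_u)
lemma kap_sD: "kap (sD D) = 0" by (simp add: kap_def sD_u)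

lemma deg_V: "deg H E = (\<Sum>w\<in>V. E w)" by (simp add: deg_def V_def)

lemma P_char:
  assumes D: "D \<in> Div G"
  shows "(\<forall>E. effective H E \<and> deg H E = int k \<longrightarrow> (\<exists>F. effective H F \<and> lin_equiv H F (\<lambda>v. sD D v - E v)))
     \<longleftrightarrow> PsiW W L a (sD D) k"
proof
  assume A: "\<forall>E. effective H E \<and> deg H E = int k \<longrightarrow> (\<exists>F. effective H F \<and> lin_equiv H F (\<lambda>v. sD D v - E v))"
  show "PsiW W L a (sD D) k"
    unfolding PsiW_def
  proof (intro allI impI conjI)
    fix P :: "'v + 'e \<times> nat \<Rightarrow> int"
    assume P: "(\<forall>w. w \<notin> W \<longrightarrow> P w = 0) \<and> (\<forall>w. 0 \<le> P w) \<and> (\<Sum>w\<in>W. P w) = int k"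
    have Pu: "\<And>j. P (u j) = 0" using P u_notW by blast
    have PDiv: "P \<in> Div H" using P unfolding Div_def V_def[symmetric] W_def by auto
    have effP: "effective H P" using P PDiv by (simp add: effective_def)
    have degP: "deg H P = int k" using P Pu by (simp add: deg_V sumV)
    have Fdiv: "\<And>E. E \<in> Div H \<Longrightarrow> (\<lambda>v. sD D v - E v) \<in> Div H"
      using sD_Div[OF D] by (auto simp: Div_def)
    from A effP degP obtain F where "effective H F" "lin_equiv H F (\<lambda>v. sD D v - P v)" by blast
    then have "PhiW W L (\<lambda>w. rho (\<lambda>v. sD D v - P v) w -
        (if int N dvd kap (\<lambda>v. sD D v - P v) then 0 else ind a w))"
      using L_char[OF Fdiv[OF PDiv]] by blast
    moreover have "kap (\<lambda>v. sD D v - P v) = 0" by (simp add: kap_def sD_u Pu)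
    ultimately show "PhiW W L (\<lambda>w. sD D w - P w)"
    proof -
      assume Ph: "PhiW W L (\<lambda>w. rho (\<lambda>v. sD D v - P v) w -
        (if int N dvd kap (\<lambda>v. sD D v - P v) then 0 else ind a w))"
        and k0: "kap (\<lambda>v. sD D v - P v) = 0"
      show ?thesis
      proof (subst PhiW_cong[of W _ "\<lambda>w. rho (\<lambda>v. sD D v - P v) w -
        (if int N dvd kap (\<lambda>v. sD D v - P v) then 0 else ind a w)"])
        fix w assume w: "w \<in> W"
        show "sD D w - P w = rho (\<lambda>v. sD D v - P v) w -
          (if int N dvd kap (\<lambda>v. sD D v - P v) then 0 else ind a w)"
          using k0 by (simp add: rho_diff rho_sD rho_def Pu sD_u)
      qed (rule Ph)
    qed
    assume Pa: "1 \<le> P a"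
    define E where "E w = P w - ind a w + ind (u 1) w" for w
    have u1V: "u 1 \<in> V" using u_V m_pos by simp
    have EDiv: "E \<in> Div H" using PDiv a_V u1V by (auto simp: Div_def E_def ind_def V_def)
    have effE: "effective H E"
      using EDiv P Pa a_ne_u by (auto simp: effective_def E_def ind_def)
    have degE: "deg H E = int k"
    proof -
      have "deg H E = (\<Sum>w\<in>V. P w) - (\<Sum>w\<in>V. ind a w) + (\<Sum>w\<in>V. ind (u 1) w)"
        by (simp add: deg_V E_def sum.distrib sum_subtractf)
      also have "(\<Sum>w\<in>V. ind a w) = 1" using a_V finVH by (simp add: ind_def)
      also have "(\<Sum>w\<in>V. ind (u 1) w) = 1" using u1V finVH by (simp add: ind_def)
      finally show ?thesis using degP by (simp add: deg_V)
    qed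
    from A effE degE obtain F where "effective H F" "lin_equiv H F (\<lambda>v. sD D v - E v)" by blast
    then have "PhiW W L (\<lambda>w. rho (\<lambda>v. sD D v - E v) w -
        (if int N dvd kap (\<lambda>v. sD D v - E v) then 0 else ind a w))"
      using L_char[OF Fdiv[OF EDiv]] by blast
    moreover have "kap (\<lambda>v. sD D v - E v) = -1"
    proof -
      have "kap E = (\<Sum>j=1..m. int j * ind (u 1) (u j))"
        unfolding kap_def E_def by (rule sum.cong) (auto simp: Pu ind_def a_ne_u u_ne_a)
      also have "\<dots> = 1" using sum_uu[of 1 int] m_pos by simp
      finally show ?thesis using kap_diff[of "sD D" E] kap_sD by simp
    qed
    moreover have "\<not> int N dvd -1" using m_pos by (simp add: N_def)
    moreover have "(\<Sum>j=1..m. E (u j)) = 1"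
    proof -
      have "(\<Sum>j=1..m. E (u j)) = (\<Sum>j=1..m. ind (u 1) (u j))"
        unfolding E_def by (rule sum.cong) (auto simp: Pu ind_def a_ne_u u_ne_a)
      also have "\<dots> = 1" using sum_uu[of 1 "\<lambda>_. 1"] m_pos by simp
      finally show ?thesis .
    qed
    ultimately show "PhiW W L (\<lambda>w. sD D w - P w - ind a w)"
    proof -
      assume Ph: "PhiW W L (\<lambda>w. rho (\<lambda>v. sD D v - E v) w -
        (if int N dvd kap (\<lambda>v. sD D v - E v) then 0 else ind a w))"
        and k1: "kap (\<lambda>v. sD D v - E v) = -1" and nd: "\<not> int N dvd -1"
        and s1: "(\<Sum>j=1..m. E (u j)) = 1"
      show ?thesis
      proof (subst PhiW_cong[of W _ "\<lambda>w. rho (\<lambda>v. sD D v - E v) w -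
        (if int N dvd kap (\<lambda>v. sD D v - E v) then 0 else ind a w)"])
        fix w assume w: "w \<in> W"
        have "ind (u 1) w = 0" using u_notW w by (auto simp: ind_def)
        then have Ew: "E w = P w - ind a w" by (simp add: E_def)
        have r: "rho (\<lambda>v. sD D v - E v) w = sD D w - E w - (if w = a then 1 else 0)"
          unfolding rho_diff rho_sD rho_def s1 by (simp add: sD_u)
        show "sD D w - P w - ind a w = rho (\<lambda>v. sD D v - E v) w -
          (if int N dvd kap (\<lambda>v. sD D v - E v) then 0 else ind a w)"
          unfolding r k1 Ew using nd by (simp add: ind_def)
      qed (rule Ph)
    qed
  qed
next
  assume Psi: "PsiW W L a (sD D) k"
  show "\<forall>E. effective H E \<and> deg H E = int k \<longrightarrow> (\<exists>F. effective H F \<and> lin_equiv H F (\<lambda>v. sD D v - E v))"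
  proof (intro allI impI)
    fix E assume E: "effective H E \<and> deg H E = int k"
    have EDiv: "E \<in> Div H" and nn: "\<And>w. 0 \<le> E w" using E by (auto simp: effective_def)
    define P where "P w = (if w \<in> W then rho E w else 0)" for w
    have su: "0 \<le> (\<Sum>j=1..m. E (u j))" using nn by (simp add: sum_nonneg)
    have Pnn: "\<forall>w. 0 \<le> P w"
    proof
      fix w show "0 \<le> P w" using nn[of w] su by (simp add: P_def rho_def)
    qed
    have "(\<Sum>w\<in>W. P w) = (\<Sum>w\<in>W. E w) + (\<Sum>w\<in>W. if w = a then (\<Sum>j=1..m. E (u j)) else 0)"
      unfolding P_def rho_def by (simp add: sum.distrib)
    also have "\<dots> = (\<Sum>w\<in>V. E w)" using finW a_W by (simp add: sumV sum.delta)
    finally have Psum: "(\<Sum>w\<in>W. P w) = int k" using E by (simp add: deg_V)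
    have FDiv: "(\<lambda>v. sD D v - E v) \<in> Div H" using sD_Div[OF D] EDiv by (auto simp: Div_def)
    have Pprem: "(\<forall>w. w \<notin> W \<longrightarrow> P w = 0) \<and> (\<forall>w. 0 \<le> P w) \<and> (\<Sum>w\<in>W. P w) = int k"
      using Pnn Psum by (simp add: P_def)
    have eqW: "\<And>w. w \<in> W \<Longrightarrow> rho (\<lambda>v. sD D v - E v) w = sD D w - P w"
      by (simp add: rho_diff rho_sD P_def)
    have kE: "kap (\<lambda>v. sD D v - E v) = - kap E" using kap_diff[of "sD D" E] kap_sD by simp
    have LC: "(\<exists>F. effective H F \<and> lin_equiv H F (\<lambda>v. sD D v - E v)) \<longleftrightarrow>
        PhiW W L (\<lambda>w. rho (\<lambda>v. sD D v - E v) w - (if int N dvd kap (\<lambda>v. sD D v - E v) then 0 else ind a w))"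
      by (rule L_char[OF FDiv])
    show "\<exists>F. effective H F \<and> lin_equiv H F (\<lambda>v. sD D v - E v)"
    proof (cases "int N dvd kap E")
      case True
      then have dv: "int N dvd kap (\<lambda>v. sD D v - E v)" using kE by simp
      have Ph: "PhiW W L (\<lambda>w. sD D w - P w)" using Psi Pprem unfolding PsiW_def by blast
      have "PhiW W L (\<lambda>w. rho (\<lambda>v. sD D v - E v) w - (if int N dvd kap (\<lambda>v. sD D v - E v) then 0 else ind a w))
          = PhiW W L (\<lambda>w. sD D w - P w)"
        by (rule PhiW_cong) (simp add: eqW dv)
      then show ?thesis using LC Ph by simp
    next
      case False
      then have nd: "\<not> int N dvd kap (\<lambda>v. sD D v - E v)" using kE by simp
      obtain j where j: "j \<in> {1..m}" "E (u j) \<noteq> 0" using kap_ne[OF False] by blast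
      have "\<forall>j\<in>{1..m}. 0 \<le> E (u j)" using nn by simp
      then have "1 \<le> (\<Sum>j=1..m. E (u j))" using sum_u_ge1[of E j] j by simp
      then have "1 \<le> P a" using a_W nn[of a] by (simp add: P_def rho_def)
      then have Ph: "PhiW W L (\<lambda>w. sD D w - P w - ind a w)" using Psi Pprem unfolding PsiW_def by blast
      have "PhiW W L (\<lambda>w. rho (\<lambda>v. sD D v - E v) w - (if int N dvd kap (\<lambda>v. sD D v - E v) then 0 else ind a w))
          = PhiW W L (\<lambda>w. sD D w - P w - ind a w)"
        by (rule PhiW_cong) (simp add: eqW nd)
      then show ?thesis using LC Ph by simp
    qed
  qed
qed

lemma rank_char:
  assumes D: "D \<in> Div G"
  shows "rank H (sD D) = (if \<not> PsiW W L a (sD D) 0 then -1 else int (GREATEST k. PsiW W L a (sD D) k))"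
proof -
  have ex: "(\<exists>F. effective H F \<and> lin_equiv H F (sD D)) \<longleftrightarrow> PsiW W L a (sD D) 0"
  proof -
    have "(\<forall>E. effective H E \<and> deg H E = int 0 \<longrightarrow> (\<exists>F. effective H F \<and> lin_equiv H F (\<lambda>v. sD D v - E v)))
      \<longleftrightarrow> (\<exists>F. effective H F \<and> lin_equiv H F (sD D))"
    proof
      assume h: "\<forall>E. effective H E \<and> deg H E = int 0 \<longrightarrow> (\<exists>F. effective H F \<and> lin_equiv H F (\<lambda>v. sD D v - E v))"
      have "effective H (\<lambda>_. 0) \<and> deg H (\<lambda>_. 0) = int 0" by (simp add: effective_def Div_def deg_def)
      then show "\<exists>F. effective H F \<and> lin_equiv H F (sD D)" using h by fastforce
    next
      assume h: "\<exists>F. effective H F \<and> lin_equiv H F (sD D)"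
      show "\<forall>E. effective H E \<and> deg H E = int 0 \<longrightarrow> (\<exists>F. effective H F \<and> lin_equiv H F (\<lambda>v. sD D v - E v))"
      proof (intro allI impI)
        fix E assume E: "effective H E \<and> deg H E = int 0"
        have "\<forall>w\<in>V. E w = 0"
          using E finVH sum_nonneg_eq_0_iff[of V E] by (auto simp: effective_def deg_V)
        then have "E = (\<lambda>_. 0)" using E by (auto simp: effective_def Div_def V_def)
        then show "\<exists>F. effective H F \<and> lin_equiv H F (\<lambda>v. sD D v - E v)" using h by simp
      qed
    qed
    then show ?thesis using P_char[OF D, of 0] by simp
  qed
  show ?thesis
    unfolding rank_def ex using P_char[OF D] by simp
qed

lemma W_explicit: "W = Inl ` verts G \<union> {Inr (e, j) | e j. e \<in> edges G \<and> is_loop G e \<and> e \<noteq> e0 \<and> 1 \<le> j \<and> j \<le> n e}"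
proof (rule set_eqI)
  fix x :: "'v + 'e \<times> nat"
  show "x \<in> W \<longleftrightarrow> x \<in> Inl ` verts G \<union> {Inr (e, j) | e j. e \<in> edges G \<and> is_loop G e \<and> e \<noteq> e0 \<and> 1 \<le> j \<and> j \<le> n e}"
  proof (cases x)
    case (Inl y)
    then show ?thesis unfolding W_def X_def V_def refine_simps u_def by auto
  next
    case (Inr z)
    obtain e j where z: "z = (e, j)" by (cases z) auto
    show ?thesis
    proof (cases "e = e0")
      case True
      then show ?thesis unfolding Inr z W_def X_def V_def refine_simps u_def m_def by auto
    next
      case False
      then show ?thesis unfolding Inr z W_def X_def V_def refine_simps u_def m_def by auto
    qed
  qed
qed

lemma e0_edge_X: "x \<in> edges H \<Longrightarrow> fst x = e0 \<Longrightarrow> src H x \<in> X \<or> tgt H x \<in> X"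
proof -
  assume x: "x \<in> edges H" "fst x = e0"
  obtain k where xk: "x = (e0, k)" using x by (cases x) auto
  have k: "k \<le> m" using x e0loop by (simp add: xk edges_H m_def)
  show ?thesis
  proof (cases "k = 0")
    case True
    have "tgt H x = pos 1" using tgt_e0[of 0] m_pos by (simp add: xk True)
    then show ?thesis using pos_u[of 1] u_X[of 1] m_pos by simp
  next
    case False
    have "src H x = u k" using src_e0[OF k] pos_u[of k] False k by (simp add: xk)
    then show ?thesis using u_X[of k] False k by simp
  qed
qed

lemma a_eq: "a = Inl (src G e0)" by (simp add: a_def)

end

lemma key_step:
  assumes l1: "lp G n e0" and l2: "lp G n' e0"
    and agree: "\<forall>e\<in>edges G. is_loop G e \<and> e \<noteq> e0 \<longrightarrow> n e = n' e"
    and D: "D \<in> Div G"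
  shows "rank (refine G n) (sigma_ext D) = rank (refine G n') (sigma_ext D)"
proof -
  interpret A: lp G n e0 by (rule l1)
  interpret B: lp G n' e0 by (rule l2)
  have cc: "(\<lambda>e j. e \<in> edges G \<and> is_loop G e \<and> e \<noteq> e0 \<and> 1 \<le> j \<and> j \<le> n e) =
      (\<lambda>e j. e \<in> edges G \<and> is_loop G e \<and> e \<noteq> e0 \<and> 1 \<le> j \<and> j \<le> n' e)"
    by (intro ext) (use agree in auto)
  have WW: "A.W = B.W" unfolding A.W_explicit B.W_explicit using cc by metis
  have aa: "A.a = B.a" by (simp add: A.a_eq B.a_eq)
  have inum_eq: "inum (refine G n) v w = inum (refine G n') v w" if v: "v \<in> A.W" and w: "w \<in> A.W" and vw: "v \<noteq> w" for v w
  proof -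
    have vB: "v \<in> B.W" and wB: "w \<in> B.W" using v w WW by auto
    have SA: "{x \<in> edges (refine G n). {src (refine G n) x, tgt (refine G n) x} = {v, w}} =
              {x \<in> edges (refine G n). fst x \<noteq> e0 \<and> {src (refine G n) x, tgt (refine G n) x} = {v, w}}"
      using A.e0_edge_X v w unfolding A.W_def by (auto simp: doubleton_eq_iff)
    have SB: "{x \<in> edges (refine G n'). {src (refine G n') x, tgt (refine G n') x} = {v, w}} =
              {x \<in> edges (refine G n'). fst x \<noteq> e0 \<and> {src (refine G n') x, tgt (refine G n') x} = {v, w}}"
      using B.e0_edge_X vB wB unfolding B.W_def by (auto simp: doubleton_eq_iff)
    have C: "{x \<in> edges (refine G n). fst x \<noteq> e0 \<and> {src (refine G n) x, tgt (refine G n) x} = {v, w}} =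
             {x \<in> edges (refine G n'). fst x \<noteq> e0 \<and> {src (refine G n') x, tgt (refine G n') x} = {v, w}}"
    proof (rule set_eqI)
      fix x
      show "x \<in> {x \<in> edges (refine G n). fst x \<noteq> e0 \<and> {src (refine G n) x, tgt (refine G n) x} = {v, w}} \<longleftrightarrow>
            x \<in> {x \<in> edges (refine G n'). fst x \<noteq> e0 \<and> {src (refine G n') x, tgt (refine G n') x} = {v, w}}"
      proof -
      obtain e k where x: "x = (e, k)" by (cases x)
      show ?thesis
      proof (cases "e \<in> edges G \<and> e \<noteq> e0")
        case True
        then have "(e,k) \<in> edges (refine G n) \<longleftrightarrow> (e,k) \<in> edges (refine G n')"
          "src (refine G n) (e,k) = src (refine G n') (e,k)" "tgt (refine G n) (e,k) = tgt (refine G n') (e,k)"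
          using agree unfolding refine_simps by auto
        then show ?thesis by (simp add: x)
      next
        case False
        then have "x \<notin> {x \<in> edges (refine G n). fst x \<noteq> e0}" "x \<notin> {x \<in> edges (refine G n'). fst x \<noteq> e0}"
          unfolding x refine_simps by auto
        then show ?thesis by blast
      qed
      qed
    qed
    show ?thesis using vw unfolding inum_def using SA SB C by simp
  qed
  have LL: "A.L v w = B.L v w" if v: "v \<in> A.W" and w: "w \<in> A.W" for v w
  proof -
    have vB: "v \<in> B.W" and wB: "w \<in> B.W" using v w WW by auto
    show ?thesis
  proof (cases "v = w")
    case False
    then show ?thesis using A.L_off[OF v w False] B.L_off[OF vB wB False] inum_eq[OF v w False] by simp
  next
    case True
    have "(\<Sum>x\<in>A.W - {v}. A.L v x) = (\<Sum>x\<in>B.W - {v}. B.L v x)"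
      unfolding WW[symmetric]
    proof (rule sum.cong)
      fix x assume x: "x \<in> A.W - {v}"
      then have xA: "x \<in> A.W" "v \<noteq> x" by auto
      then have xB: "x \<in> B.W" using WW by simp
      show "A.L v x = B.L v x"
        using A.L_off[OF v xA(1) xA(2)] B.L_off[OF vB xB xA(2)] inum_eq[OF v xA(1) xA(2)] by simp
    qed simp
    then show ?thesis using A.L_diag[OF v] B.L_diag[OF vB] WW True by simp
  qed
  qed
  have PP: "\<And>k. PsiW A.W A.L A.a (sigma_ext D) k = PsiW B.W B.L B.a (sigma_ext D) k"
  proof -
    fix k
    have "PsiW B.W A.L B.a (sigma_ext D) k = PsiW B.W B.L B.a (sigma_ext D) k"
      by (rule PsiW_congL) (use LL WW in auto)
    then show "PsiW A.W A.L A.a (sigma_ext D) k = PsiW B.W B.L B.a (sigma_ext D) k"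
      using WW aa by simp
  qed
  have PPe: "PsiW A.W A.L A.a (sigma_ext D) = PsiW B.W B.L B.a (sigma_ext D)"
    by (rule ext) (rule PP)
  show ?thesis using A.rank_char[OF D] B.rank_char[OF D] PPe by simp
qed




lemma inum_cong:
  assumes E: "edges H = edges H'" and st: "\<forall>x\<in>edges H. src H x = src H' x \<and> tgt H x = tgt H' x"
  shows "inum H = inum H'"
proof (intro ext)
  fix v w
  have 1: "{e \<in> edges H. {src H e, tgt H e} = {v, w}} = {e \<in> edges H'. {src H' e, tgt H' e} = {v, w}}"
    using E st by auto
  have 2: "{e \<in> edges H. src H e = v \<and> tgt H e \<noteq> v} = {e \<in> edges H'. src H' e = v \<and> tgt H' e \<noteq> v}"
    using E st by auto
  have 3: "{e \<in> edges H. tgt H e = v \<and> src H e \<noteq> v} = {e \<in> edges H'. tgt H' e = v \<and> src H' e \<noteq> v}"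
    using E st by auto
  have 4: "{e \<in> edges H. src H e = v \<and> tgt H e = v} = {e \<in> edges H'. src H' e = v \<and> tgt H' e = v}"
    using E st by auto
  show "inum H v w = inum H' v w"
    unfolding inum_def val_def loopnum_def 1 2 3 4 by simp
qed

lemma refine_agree:
  assumes agree: "\<forall>e\<in>edges G. is_loop G e \<longrightarrow> n e = n' e"
  shows "rank (refine G n) D = rank (refine G n') D"
proof (rule rank_cong)
  have cc: "(\<lambda>e j. e \<in> edges G \<and> is_loop G e \<and> 1 \<le> j \<and> j \<le> n e) =
      (\<lambda>e j. e \<in> edges G \<and> is_loop G e \<and> 1 \<le> j \<and> j \<le> n' e)"
    by (intro ext) (use agree in auto)
  show "verts (refine G n) = verts (refine G n')" unfolding refine_simps using cc by metis
  have cc2: "(\<lambda>e k. e \<in> edges G \<and> is_loop G e \<and> k \<le> n e) =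
      (\<lambda>e k. e \<in> edges G \<and> is_loop G e \<and> k \<le> n' e)"
    by (intro ext) (use agree in auto)
  have E: "edges (refine G n) = edges (refine G n')" unfolding refine_simps using cc2 by metis
  have st: "\<forall>x\<in>edges (refine G n). src (refine G n) x = src (refine G n') x \<and> tgt (refine G n) x = tgt (refine G n') x"
  proof
    fix x assume x: "x \<in> edges (refine G n)"
    obtain e k where xe: "x = (e, k)" by (cases x)
    have "e \<in> edges G" using x unfolding xe refine_simps by auto
    then show "src (refine G n) x = src (refine G n') x \<and> tgt (refine G n) x = tgt (refine G n') x"
      using agree unfolding xe refine_simps by auto
  qed
  show "inum (refine G n) = inum (refine G n')" by (rule inum_cong[OF E st])
qed

theorem proposition3p4:
  fixes G :: "('v, 'e) mgraph" and n :: "'e \<Rightarrow> nat" and D :: "'v \<Rightarrow> int"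
  assumes "finite_connected_graph G"
    and "\<forall>e \<in> edges G. is_loop G e \<longrightarrow> 0 < n e"
    and "D \<in> Div G"
  shows "rank_sharp G D = rank (refine G n) (sigma_ext D)"
proof -
  have finV: "finite (verts G)" and finE: "finite (edges G)"
    and ends: "\<forall>e\<in>edges G. src G e \<in> verts G \<and> tgt G e \<in> verts G"
    using assms(1) by (auto simp: finite_connected_graph_def)
  define Lp where "Lp = {e \<in> edges G. is_loop G e}"
  have finLp: "finite Lp" using finE by (simp add: Lp_def)
  have main: "\<forall>n n'. (\<forall>e\<in>Lp. 0 < n e) \<and> (\<forall>e\<in>Lp. 0 < n' e) \<and> (\<forall>e\<in>Lp - S. n e = n' e) \<longrightarrow>
      rank (refine G n) (sigma_ext D) = rank (refine G n') (sigma_ext D)"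
    if "finite S" "S \<subseteq> Lp" for S
    using that
  proof (induction S rule: finite_induct)
    case empty
    show ?case
    proof (intro allI impI)
      fix n n' :: "'e \<Rightarrow> nat"
      assume "(\<forall>e\<in>Lp. 0 < n e) \<and> (\<forall>e\<in>Lp. 0 < n' e) \<and> (\<forall>e\<in>Lp - {}. n e = n' e)"
      then have "\<forall>e\<in>edges G. is_loop G e \<longrightarrow> n e = n' e" by (auto simp: Lp_def)
      then show "rank (refine G n) (sigma_ext D) = rank (refine G n') (sigma_ext D)"
        by (rule refine_agree)
    qed
  next
    case (insert e0 S)
    show ?case
    proof (intro allI impI)
      fix n n' :: "'e \<Rightarrow> nat"
      assume h: "(\<forall>e\<in>Lp. 0 < n e) \<and> (\<forall>e\<in>Lp. 0 < n' e) \<and> (\<forall>e\<in>Lp - insert e0 S. n e = n' e)"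
      define n'' where "n'' = n'(e0 := n e0)"
      have e0L: "e0 \<in> Lp" using insert by simp
      have "(\<forall>e\<in>Lp. 0 < n e) \<and> (\<forall>e\<in>Lp. 0 < n'' e) \<and> (\<forall>e\<in>Lp - S. n e = n'' e)"
        using h e0L by (auto simp: n''_def)
      then have r1: "rank (refine G n) (sigma_ext D) = rank (refine G n'') (sigma_ext D)"
        using insert.IH insert.prems by auto
      have l1: "lp G n'' e0" using finV finE ends e0L h
        by (unfold_locales) (auto simp: Lp_def n''_def)
      have l2: "lp G n' e0" using finV finE ends e0L h
        by (unfold_locales) (auto simp: Lp_def)
      have "rank (refine G n'') (sigma_ext D) = rank (refine G n') (sigma_ext D)"
        by (rule key_step[OF l1 l2 _ assms(3)]) (simp add: n''_def)
      then show "rank (refine G n) (sigma_ext D) = rank (refine G n') (sigma_ext D)" using r1 by simp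
    qed
  qed
  have "rank (refine G n) (sigma_ext D) = rank (refine G (\<lambda>_. 1)) (sigma_ext D)"
    using main[OF finLp order_refl] assms(2) by (auto simp: Lp_def)
  then show ?thesis by (simp add: rank_sharp_def)
qed


end
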